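(* Let $a>1$. Then $S_n$, $S_n^+$, $B_1$, $G_4$, $H_4$ has the maximum value of $SEI_a$ among all $n$-vertex trees, unicyclic graphs, bicyclic graphs, tricyclic graphs and tetracyclic graphs, respectively.
   Context: All graphs are finite, simple, undirected and connected. A connected graph with $n$ vertices and $m$ edges is a tree, unicyclic, bicyclic, tricyclic, tetracyclic graph if $m=n-1,n,n+1,n+2,n+3$ respectively. The variable sum exdeg index is $SEI_a(G)=\sum_{uv\in E(G)}(a^{d_u}+a^{d_v})$, $d_u$ the degree of $u$. $S_n$ is the star on $n$ vertices. The following graphs are obtained from $S_n$ by adding edges between leaves: $S_n^+$: add one edge; $B_1$: add two edges sharing a common leaf; $G_4$: join one leaf to three other leaves (exists for $n\ge5$); $H_4$: join one leaf to four other leaves (exists for $n\ge 6$). Each statement is for those $n$ for which the respective graph exists. *)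

theory Defs
  imports Complex_Main
begin

definition simple_graph :: "'a set \<Rightarrow> 'a set set \<Rightarrow> bool" where
  "simple_graph V E \<longleftrightarrow> finite V \<and> (\<forall>e\<in>E. e \<subseteq> V \<and> card e = 2)"

definition adj_rel :: "'a set set \<Rightarrow> ('a \<times> 'a) set" where
  "adj_rel E = {(u, v). {u, v} \<in> E}"

definition connected_graph :: "'a set \<Rightarrow> 'a set set \<Rightarrow> bool" where
  "connected_graph V E \<longleftrightarrow> simple_graph V E \<and> V \<noteq> {} \<and>
     (\<forall>u\<in>V. \<forall>v\<in>V. (u, v) \<in> (adj_rel E)\<^sup>*)"

definition degree :: "'a set set \<Rightarrow> 'a \<Rightarrow> nat" where
  "degree E v = card {e \<in> E. v \<in> e}"

definition SEI :: "real \<Rightarrow> 'a set set \<Rightarrow> real" where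
  "SEI a E = (\<Sum>e\<in>E. \<Sum>v\<in>e. a ^ degree E v)"

text \<open>Connected graphs with n vertices and n - 1 + c edges (c = 0: trees,
 1: unicyclic, 2: bicyclic, 3: tricyclic, 4: tetracyclic).\<close>
definition cyc_class :: "nat \<Rightarrow> nat \<Rightarrow> 'a set \<Rightarrow> 'a set set \<Rightarrow> bool" where
  "cyc_class c n V E \<longleftrightarrow> connected_graph V E \<and> card V = n \<and> card E + 1 = n + c"

definition star_V :: "nat \<Rightarrow> nat set" where
  "star_V n = {0..<n}"

definition star_E :: "nat \<Rightarrow> nat set set" where
  "star_E n = {{0, i} | i. 1 \<le> i \<and> i < n}"

definition Sn_plus_E :: "nat \<Rightarrow> nat set set" where
  "Sn_plus_E n = star_E n \<union> {{1, 2}}"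

definition B1_E :: "nat \<Rightarrow> nat set set" where
  "B1_E n = star_E n \<union> {{1, 2}, {1, 3}}"

definition G4_E :: "nat \<Rightarrow> nat set set" where
  "G4_E n = star_E n \<union> {{1, 2}, {1, 3}, {1, 4}}"

definition H4_E :: "nat \<Rightarrow> nat set set" where
  "H4_E n = star_E n \<union> {{1, 2}, {1, 3}, {1, 4}, {1, 5}}"

definition is_SEI_max :: "real \<Rightarrow> nat \<Rightarrow> nat \<Rightarrow> nat set \<Rightarrow> nat set set \<Rightarrow> 'a itself \<Rightarrow> bool" where
  "is_SEI_max a c n V0 E0 _ \<longleftrightarrow> cyc_class c n V0 E0 \<and>
     (\<forall>(V :: 'a set) E. cyc_class c n V E \<longrightarrow> SEI a E \<le> SEI a E0)"

end

theory Submission imports Defs begin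

definition convx :: "(nat \<Rightarrow> real) \<Rightarrow> bool" where
  "convx \<phi> \<longleftrightarrow> (\<forall>t. \<phi> (t+1) - \<phi> t \<le> \<phi> (t+2) - \<phi> (t+1))"

lemma convx_B0:
  assumes "convx \<phi>" "s \<le> t"
  shows "\<phi> (s+1) - \<phi> s \<le> \<phi> (t+1) - \<phi> t"
  using assms(2)
proof (induction t rule: dec_induct)
  case base then show ?case by simp
next
  case (step t)
  have "\<phi> (t+1) - \<phi> t \<le> \<phi> (t+2) - \<phi> (t+1)" using assms(1) unfolding convx_def by blast
  then show ?case using step by (simp add: add.commute)
qed

lemma convx_B:
  assumes "convx \<phi>" "p \<le> q"
  shows "\<phi> (p+u) - \<phi> p \<le> \<phi> (q+u) - \<phi> q"
proof (induction u)
  case 0 then show ?case by simp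
next
  case (Suc u)
  have "\<phi> (p+u+1) - \<phi> (p+u) \<le> \<phi> (q+u+1) - \<phi> (q+u)"
    using convx_B0[OF assms(1), of "p+u" "q+u"] assms(2) by simp
  then show ?case using Suc by simp
qed

definition ff :: "real \<Rightarrow> nat \<Rightarrow> real" where
  "ff a t = real t * a ^ t"

definition gg :: "real \<Rightarrow> nat \<Rightarrow> real" where
  "gg a t = ff a (t+1) - ff a 1"

lemma ff_d2:
  "ff a (t+2) - 2 * ff a (t+1) + ff a t = a^t * ((a-1) * (real t * (a-1) + 2*a))"
  unfolding ff_def by (simp add: power_add algebra_simps power2_eq_square)

lemma ff_d3:
  "ff a (t+3) - 3 * ff a (t+2) + 3 * ff a (t+1) - ff a t = a^t * ((a-1)^2 * (real t * (a-1) + 3*a))"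
  unfolding ff_def by (simp add: power_add algebra_simps power2_eq_square numeral_3_eq_3)

lemma gg_convx:
  assumes "a > 1" shows "convx (gg a)"
  unfolding convx_def
proof
  fix t
  have "0 \<le> a^(t+1) * ((a-1) * (real (t+1) * (a-1) + 2*a))"
    using assms by (intro mult_nonneg_nonneg) auto
  then have "0 \<le> ff a (t+1+2) - 2 * ff a (t+1+1) + ff a (t+1)" by (simp only: ff_d2)
  then show "gg a (t+1) - gg a t \<le> gg a (t+2) - gg a (t+1)"
    unfolding gg_def by (simp add: algebra_simps)
qed

lemma gg_inc_convx:
  assumes "a > 1" shows "convx (\<lambda>t. gg a (t+1) - gg a t)"
  unfolding convx_def
proof
  fix t
  have "0 \<le> a^(t+1) * ((a-1)^2 * (real (t+1) * (a-1) + 3*a))"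
    using assms by (intro mult_nonneg_nonneg) auto
  then have "0 \<le> ff a (t+1+3) - 3 * ff a (t+1+2) + 3 * ff a (t+1+1) - ff a (t+1)" by (simp only: ff_d3)
  then show "gg a (t + 1 + 1) - gg a (t + 1) - (gg a (t + 1) - gg a t)
         \<le> gg a (t + 2 + 1) - gg a (t + 2) - (gg a (t + 1 + 1) - gg a (t + 1))"
    unfolding gg_def by (simp add: algebra_simps numeral_3_eq_3)
qed

lemma gg0: "gg a 0 = 0" unfolding gg_def by simp


lemma double_count:
  fixes \<phi> :: "'a \<Rightarrow> 'b::comm_semiring_1"
  assumes "finite V" "finite E" "\<forall>e\<in>E. e \<subseteq> V"
  shows "(\<Sum>e\<in>E. \<Sum>v\<in>e. \<phi> v) = (\<Sum>v\<in>V. of_nat (degree E v) * \<phi> v)"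
proof -
  have "(\<Sum>e\<in>E. \<Sum>v\<in>e. \<phi> v) = (\<Sum>e\<in>E. \<Sum>v\<in>V. if v \<in> e then \<phi> v else 0)"
  proof (rule sum.cong[OF refl])
    fix e assume "e \<in> E"
    then have "V \<inter> e = e" using assms(3) by auto
    then show "(\<Sum>v\<in>e. \<phi> v) = (\<Sum>v\<in>V. if v \<in> e then \<phi> v else 0)"
      using sum.inter_restrict[OF assms(1), of \<phi> e] by simp
  qed
  also have "\<dots> = (\<Sum>v\<in>V. \<Sum>e\<in>E. if v \<in> e then \<phi> v else 0)" by (rule sum.swap)
  also have "\<dots> = (\<Sum>v\<in>V. of_nat (degree E v) * \<phi> v)"
  proof (rule sum.cong[OF refl])
    fix v
    have "(\<Sum>e\<in>E. if v \<in> e then \<phi> v else 0) = (\<Sum>e\<in>{e\<in>E. v \<in> e}. \<phi> v)"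
      using sum.inter_filter[OF assms(2), of "\<lambda>_. \<phi> v" "\<lambda>e. v \<in> e"] by simp
    then show "(\<Sum>e\<in>E. if v \<in> e then \<phi> v else 0) = of_nat (degree E v) * \<phi> v"
      unfolding degree_def by simp
  qed
  finally show ?thesis .
qed

lemma handshake:
  assumes "finite V" "finite E" "\<forall>e\<in>E. e \<subseteq> V \<and> card e = 2"
  shows "(\<Sum>v\<in>V. degree E v) = 2 * card E"
proof -
  have "(\<Sum>e\<in>E. \<Sum>v\<in>e. (1::nat)) = (\<Sum>v\<in>V. of_nat (degree E v) * 1)"
    using double_count[OF assms(1,2)] assms(3) by blast
  moreover have "(\<Sum>e\<in>E. \<Sum>v\<in>e. (1::nat)) = (\<Sum>e\<in>E. 2)"
    using assms(3) by (intro sum.cong) auto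
  ultimately show ?thesis by simp
qed

lemma two_set_eq:
  assumes "card e = 2" "x \<in> e" "y \<in> e" "x \<noteq> y"
  shows "e = {x, y}"
  using assms by (auto simp: card_2_iff)

lemma deg_pair_bound:
  assumes "finite E" "\<forall>e\<in>E. card e = 2" "x \<noteq> y"
  shows "degree E x + degree E y \<le> card E + 1"
proof -
  let ?A = "{e\<in>E. x \<in> e}" and ?B = "{e\<in>E. y \<in> e}"
  have "card ?A + card ?B = card (?A \<union> ?B) + card (?A \<inter> ?B)"
    by (rule card_Un_Int) (use assms in auto)
  moreover have "card (?A \<union> ?B) \<le> card E" by (rule card_mono) (use assms in auto)
  moreover have "?A \<inter> ?B \<subseteq> {{x,y}}" using assms two_set_eq by fastforce
  then have "card (?A \<inter> ?B) \<le> 1" using card_mono[of "{{x,y}}"] by fastforce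
  ultimately show ?thesis unfolding degree_def by linarith
qed

lemma degree_insert:
  assumes "finite E" "e \<notin> E"
  shows "degree (insert e E) v = degree E v + (if v \<in> e then 1 else 0)"
proof (cases "v \<in> e")
  case True
  then have "{e'\<in>insert e E. v \<in> e'} = insert e {e'\<in>E. v \<in> e'}" by auto
  then show ?thesis unfolding degree_def using True assms by simp
next
  case False
  then have "{e'\<in>insert e E. v \<in> e'} = {e'\<in>E. v \<in> e'}" by auto
  then show ?thesis unfolding degree_def using False by simp
qed

lemma lemmaA:
  fixes \<phi> :: "nat \<Rightarrow> real"
  assumes phi0: "\<phi> 0 = 0" and cv: "convx \<phi>" and cv2: "convx (\<lambda>t. \<phi> (t+1) - \<phi> t)"
    and S: "finite S"
  shows "finite E \<Longrightarrow> \<forall>e\<in>E. e \<subseteq> S \<and> card e = 2 \<Longrightarrow>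
     (\<Sum>v\<in>S. \<phi> (degree E v)) \<le> \<phi> (card E) + card E * \<phi> 1"
proof (induction E rule: finite_induct)
  case empty
  then show ?case by (simp add: degree_def phi0)
next
  case (insert e E)
  define inc where "inc t = \<phi> (t+1) - \<phi> t" for t
  obtain x y where e: "e = {x,y}" "x \<noteq> y" using insert.prems by (auto simp: card_2_iff)
  have xy: "x \<in> S" "y \<in> S" using insert.prems e by auto
  have IH: "(\<Sum>v\<in>S. \<phi> (degree E v)) \<le> \<phi> (card E) + card E * \<phi> 1"
    using insert by auto
  have dI: "degree (insert e E) v = degree E v + (if v \<in> e then 1 else 0)" for v
    using degree_insert[OF insert.hyps(1,2)] .
  have split: "(\<Sum>v\<in>S. \<phi> (degree (insert e E) v)) =
      (\<Sum>v\<in>S. \<phi> (degree E v)) + (\<Sum>v\<in>S. if v \<in> e then inc (degree E v) else 0)"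
    unfolding sum.distrib[symmetric]
    by (rule sum.cong) (auto simp: dI inc_def)
  have s2: "(\<Sum>v\<in>S. if v \<in> e then inc (degree E v) else 0) = inc (degree E x) + inc (degree E y)"
  proof -
    have "(\<Sum>v\<in>S. if v \<in> e then inc (degree E v) else 0) = (\<Sum>v\<in>S \<inter> e. inc (degree E v))"
      using sum.inter_restrict[OF S, of "\<lambda>v. inc (degree E v)" e] by simp
    also have "S \<inter> e = {x,y}" using e xy by auto
    finally show ?thesis using e by simp
  qed
  let ?p = "degree E x" and ?q = "degree E y"
  have pq: "degree (insert e E) x + degree (insert e E) y \<le> card (insert e E) + 1"
    using deg_pair_bound[of "insert e E" x y] insert e by auto
  then have pq2: "?p + ?q \<le> card E" using dI[of x] dI[of y] e insert.hyps by simp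
  have c1: "inc (0 + ?p) - inc 0 \<le> inc (?q + ?p) - inc ?q"
    using convx_B[OF cv2[folded inc_def], of 0 ?q ?p] by simp
  have c2: "inc (?q + ?p) \<le> inc (card E)"
    using convx_B0[OF cv, of "?q + ?p" "card E"] pq2 unfolding inc_def by simp
  have "card (insert e E) = card E + 1" using insert.hyps by simp
  then have "\<phi> (card (insert e E)) + card (insert e E) * \<phi> 1 =
     \<phi> (card E) + card E * \<phi> 1 + inc (card E) + inc 0"
    unfolding inc_def by (simp add: phi0 algebra_simps)
  then show ?case using split s2 IH c1 c2 by simp
qed

lemma transfer:
  fixes \<phi> :: "nat \<Rightarrow> real"
  assumes cv: "convx \<phi>" and S: "finite S"
  shows "\<forall>v\<in>S. h v \<le> y v \<and> y v \<le> X \<Longrightarrow> sum y S = sum h S + D \<Longrightarrow>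
    (\<Sum>v\<in>S. \<phi> (y v)) \<le> (\<Sum>v\<in>S. \<phi> (h v)) + \<phi> (X + D) - \<phi> X"
  using S
proof (induction S arbitrary: D rule: finite_induct)
  case empty then show ?case by simp
next
  case (insert v S)
  have le: "sum h S \<le> sum y S" using insert.prems by (intro sum_mono) auto
  define D' where "D' = sum y S - sum h S"
  have D': "sum y S = sum h S + D'" using le D'_def by simp
  have hv: "h v \<le> y v" "y v \<le> X" using insert.prems by auto
  have DD: "D = D' + (y v - h v)" using insert.prems(2) insert.hyps D' hv by simp
  have IH: "(\<Sum>v\<in>S. \<phi> (y v)) \<le> (\<Sum>v\<in>S. \<phi> (h v)) + \<phi> (X + D') - \<phi> X"
    using insert.IH[OF _ D'] insert.prems by auto
  have "\<phi> (h v + (y v - h v)) - \<phi> (h v) \<le> \<phi> (X + D' + (y v - h v)) - \<phi> (X + D')"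
    using convx_B[OF cv, of "h v" "X + D'" "y v - h v"] hv by linarith
  then have "\<phi> (y v) - \<phi> (h v) \<le> \<phi> (X + D) - \<phi> (X + D')" using hv DD by (simp add: add.assoc)
  then show ?case using IH insert.hyps by simp
qed


lemma SEI_vertex:
  assumes "finite V" "finite E" "\<forall>e\<in>E. e \<subseteq> V"
  shows "SEI a E = (\<Sum>v\<in>V. ff a (degree E v))"
  unfolding SEI_def ff_def
  using double_count[OF assms, of "\<lambda>v. a ^ degree E v"] by simp

lemma upper:
  fixes V :: "'a set"
  assumes a: "a > 1" and cc: "cyc_class c n V E" and n2: "n \<ge> 2"
  shows "SEI a E \<le> n * ff a 1 + gg a (n-2) + gg a c + c * gg a 1"
proof -
  have sg: "simple_graph V E" and conn: "\<forall>u\<in>V. \<forall>v\<in>V. (u,v) \<in> (adj_rel E)\<^sup>*"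
    and cardV: "card V = n" and cardE: "card E + 1 = n + c"
    using cc unfolding cyc_class_def connected_graph_def by auto
  have finV: "finite V" and edges: "\<forall>e\<in>E. e \<subseteq> V \<and> card e = 2"
    using sg unfolding simple_graph_def by auto
  have finE: "finite E"
    by (rule finite_subset[of E "Pow V"]) (use edges finV in auto)
  define R where "R = adj_rel E"
  have R_iff: "(u,v) \<in> R \<longleftrightarrow> {u,v} \<in> E" for u v unfolding R_def adj_rel_def by simp
  have SEIv: "SEI a E = (\<Sum>v\<in>V. ff a (degree E v))"
    using SEI_vertex[OF finV finE] edges by blast
  have deg_pos: "degree E v \<ge> 1" if vV: "v \<in> V" for v
  proof -
    have "card (V - {v}) = n - 1" using vV cardV finV by simp
    then have "V - {v} \<noteq> {}"
    proof -
      assume h: "card (V - {v}) = n - 1"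
      show ?thesis
      proof
        assume "V - {v} = {}" then have "card (V - {v}) = 0" by (simp only: card.empty)
        then show False using h n2 by linarith
      qed
    qed
    then obtain u where u: "u \<in> V" "u \<noteq> v" by auto
    have "(v,u) \<in> R\<^sup>*" using conn u vV unfolding R_def by auto
    then obtain y where "(v,y) \<in> R"
      by (rule converse_rtranclE) (use u in auto)
    then have "{v,y} \<in> {e\<in>E. v \<in> e}" using R_iff by auto
    moreover have "finite {e\<in>E. v \<in> e}" using finE by simp
    ultimately have "card {e\<in>E. v \<in> e} > 0" using card_gt_0_iff by blast
    then show ?thesis unfolding degree_def by simp
  qed
  have "V \<noteq> {}" using cardV n2 by auto
  define M where "M = Max (degree E ` V)"
  have "M \<in> degree E ` V" unfolding M_def using finV \<open>V \<noteq> {}\<close> by (intro Max_in) auto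
  then obtain w where wV: "w \<in> V" and wM: "degree E w = M" by auto
  have maxd: "degree E v \<le> degree E w" if "v \<in> V" for v
    unfolding wM M_def using finV that by (intro Max_ge) auto
  define d where "d = degree E w"
  define N where "N = {u\<in>V. {w,u} \<in> E}"
  define S where "S = V - {w}"
  define Z where "Z = S - N"
  have finS: "finite S" using finV S_def by simp
  have cardS: "card S = n - 1" using S_def wV cardV finV by simp
  have NS: "N \<subseteq> S"
  proof
    fix u assume "u \<in> N"
    then have "u \<in> V" "{w,u} \<in> E" unfolding N_def by auto
    moreover have "u \<noteq> w"
    proof
      assume "u = w" then have "{w} \<in> E" using \<open>{w,u} \<in> E\<close> by simp
      then show False using edges by fastforce
    qed
    ultimately show "u \<in> S" unfolding S_def by auto
  qed
  have imgN: "(\<lambda>u. {w,u}) ` N = {e\<in>E. w \<in> e}"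
  proof
    show "(\<lambda>u. {w,u}) ` N \<subseteq> {e\<in>E. w \<in> e}" unfolding N_def by auto
  next
    show "{e\<in>E. w \<in> e} \<subseteq> (\<lambda>u. {w,u}) ` N"
    proof
      fix e assume e: "e \<in> {e\<in>E. w \<in> e}"
      then have "card e = 2" "e \<subseteq> V" "e \<in> E" "w \<in> e" using edges by auto
      then obtain x y where xy: "e = {x,y}" "x \<noteq> y" by (auto simp: card_2_iff)
      then obtain u where u: "e = {w,u}" using \<open>w \<in> e\<close> by auto
      then have "u \<in> N" unfolding N_def using \<open>e \<subseteq> V\<close> \<open>e \<in> E\<close> by auto
      then show "e \<in> (\<lambda>u. {w,u}) ` N" using u by auto
    qed
  qed
  have injN: "inj_on (\<lambda>u. {w,u}) N" unfolding inj_on_def by (auto simp: doubleton_eq_iff)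
  have cardN: "card N = d"
    unfolding d_def degree_def using card_image[OF injN] imgN by simp
  have finN: "finite N" using NS finS finite_subset by blast
  have dle: "d \<le> n - 1" using card_mono[OF finS NS] cardN cardS by simp
  have d1: "d \<ge> 1" using deg_pos[OF wV] d_def by simp
  have cardZ: "card Z = n - 1 - d"
    unfolding Z_def using card_Diff_subset[OF finN NS] cardN cardS by simp
  define dist where "dist v = (LEAST k. (v,w) \<in> R ^^ k)" for v
  have ex_p: "\<exists>p. {z,p} \<in> E \<and> p \<noteq> w \<and> dist p < dist z" if zZ: "z \<in> Z" for z
  proof -
    have zV: "z \<in> V" and zw: "z \<noteq> w" and zN: "z \<notin> N" using zZ unfolding Z_def S_def by auto
    have "(z,w) \<in> R\<^sup>*" using conn zV wV unfolding R_def by auto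
    then obtain k where "(z,w) \<in> R ^^ k" using rtrancl_power by blast
    then have zk: "(z,w) \<in> R ^^ dist z" unfolding dist_def by (rule LeastI)
    have "dist z \<noteq> 0" using zk zw by (cases "dist z") auto
    then obtain j where j: "dist z = Suc j" using not0_implies_Suc by blast
    from relpow_Suc_D2[OF zk[unfolded j]] obtain p where p: "(z,p) \<in> R" "(p,w) \<in> R ^^ j" by blast
    have "dist p \<le> j" unfolding dist_def using p(2) by (rule Least_le)
    moreover have "p \<noteq> w"
    proof
      assume "p = w"
      then have "{w,z} \<in> E" using p(1) R_iff by (simp add: insert_commute)
      then show False using zN zV unfolding N_def by auto
    qed
    ultimately show ?thesis using p(1) R_iff j by auto
  qed
  then have "\<forall>z\<in>Z. \<exists>p. {z,p} \<in> E \<and> p \<noteq> w \<and> dist p < dist z" by blast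
  from bchoice[OF this] obtain pz where pz: "\<forall>z\<in>Z. {z,pz z} \<in> E \<and> pz z \<noteq> w \<and> dist (pz z) < dist z"
    by blast
  define F where "F = (\<lambda>z. {z, pz z}) ` Z"
  have injF: "inj_on (\<lambda>z. {z, pz z}) Z"
  proof (rule inj_onI)
    fix z1 z2 assume z: "z1 \<in> Z" "z2 \<in> Z" "{z1, pz z1} = {z2, pz z2}"
    show "z1 = z2"
    proof (rule ccontr)
      assume "z1 \<noteq> z2"
      then have "z1 = pz z2" "pz z1 = z2" using z(3) by (auto simp: doubleton_eq_iff)
      moreover have "dist (pz z2) < dist z2" "dist (pz z1) < dist z1" using pz z(1,2) by auto
      ultimately show False by simp
    qed
  qed
  have cardF: "card F = n - 1 - d" unfolding F_def using card_image[OF injF] cardZ by simp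
  define E0 where "E0 = {e\<in>E. w \<notin> e}"
  have FE0: "F \<subseteq> E0" unfolding F_def E0_def using pz Z_def S_def by auto
  have finE0: "finite E0" using finE E0_def by simp
  have partE: "card E = d + card E0"
  proof -
    have "E = {e\<in>E. w \<in> e} \<union> E0" "{e\<in>E. w \<in> e} \<inter> E0 = {}" unfolding E0_def by auto
    moreover have "finite {e\<in>E. w \<in> e}" using finE by simp
    ultimately have "card E = card {e\<in>E. w \<in> e} + card E0"
      using card_Un_disjoint[of "{e\<in>E. w \<in> e}" E0] finE0 by simp
    then show ?thesis unfolding d_def degree_def by simp
  qed
  define H where "H = E0 - F"
  have finH: "finite H" using finE0 H_def by simp
  have cardH: "card H = c"
  proof -
    have "finite F" using finite_subset[OF FE0 finE0] .
    then have "card H = card E0 - card F" unfolding H_def using card_Diff_subset[OF _ FE0] by simp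
    moreover obtain k where k: "n - 1 = d + k" using dle le_Suc_ex by blast
    moreover have "n = Suc (d + k)" using k n2 by simp
    then have "card E0 = c + k" using partE cardE by simp
    moreover have "n - 1 - d = k" using k by simp
    ultimately show ?thesis using cardF by simp
  qed
  have edgesH: "\<forall>e\<in>H. e \<subseteq> S \<and> card e = 2"
    using edges unfolding H_def E0_def S_def by auto
  have HE: "H \<subseteq> E" unfolding H_def E0_def by auto
  have hlt: "degree H v < degree E v" if vS: "v \<in> S" for v
  proof -
    have sub: "{e\<in>H. v \<in> e} \<subseteq> {e\<in>E. v \<in> e}" using HE by auto
    have "\<exists>e\<in>E. v \<in> e \<and> e \<notin> H"
    proof (cases "v \<in> N")
      case True
      then have "{w,v} \<in> E" unfolding N_def by simp
      moreover have "{w,v} \<notin> H" unfolding H_def E0_def by simp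
      ultimately show ?thesis by blast
    next
      case False
      then have vZ: "v \<in> Z" using vS Z_def by simp
      then have "{v, pz v} \<in> E" "{v, pz v} \<in> F" using pz F_def by auto
      then show ?thesis unfolding H_def by blast
    qed
    then have "{e\<in>H. v \<in> e} \<subset> {e\<in>E. v \<in> e}" using sub by blast
    then show ?thesis unfolding degree_def using finE by (intro psubset_card_mono) auto
  qed
  have hsE: "(\<Sum>v\<in>V. degree E v) = 2 * card E" using handshake[OF finV finE edges] .
  have hsH: "(\<Sum>v\<in>S. degree H v) = 2 * c" using handshake[OF finS finH edgesH] cardH by simp
  have Vsplit: "(\<Sum>v\<in>V. q v) = q w + (\<Sum>v\<in>S. q v)" for q :: "'a \<Rightarrow> 'b::comm_monoid_add"
    unfolding S_def using sum.remove[OF finV wV] by simp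
  define y where "y v = degree E v - 1" for v
  have ySum: "(\<Sum>v\<in>S. y v) + (n - 1) = (\<Sum>v\<in>S. degree E v)"
  proof -
    have "(\<Sum>v\<in>S. degree E v) = (\<Sum>v\<in>S. y v + 1)"
    proof (rule sum.cong[OF refl])
      fix v assume "v \<in> S"
      then have "degree E v \<ge> 1" using deg_pos unfolding S_def by auto
      then show "degree E v = y v + 1" unfolding y_def by simp
    qed
    also have "\<dots> = sum y S + card S" by (subst sum.distrib) simp
    finally show ?thesis using cardS by simp
  qed
  have ySum2: "sum y S = sum (degree H) S + (n - 1 - d)"
  proof -
    have e1: "sum (degree E) S + d = 2 * card E" using hsE Vsplit[of "degree E"] unfolding d_def by simp
    have e2: "2 * card E = 2 * c + 2 * (n - 1)" using cardE n2 by simp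
    have e3: "sum y S + (n - 1) + d = 2 * c + 2 * (n - 1)" using ySum e1 e2 by simp
    obtain k where k: "n - 1 = d + k" using dle le_Suc_ex by blast
    have "sum y S = 2 * c + k" using e3 k by simp
    then show ?thesis using hsH k by simp
  qed
  have hy: "\<forall>v\<in>S. degree H v \<le> y v \<and> y v \<le> d - 1"
  proof
    fix v assume vS: "v \<in> S"
    have "degree H v < degree E v" using hlt[OF vS] .
    moreover have "degree E v \<le> d" using maxd vS unfolding S_def d_def by auto
    ultimately show "degree H v \<le> y v \<and> y v \<le> d - 1" unfolding y_def by arith
  qed
  have T: "(\<Sum>v\<in>S. gg a (y v)) \<le> (\<Sum>v\<in>S. gg a (degree H v)) + gg a (d - 1 + (n-1-d)) - gg a (d - 1)"
    using transfer[OF gg_convx[OF a] finS hy ySum2] .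
  have XD: "d - 1 + (n-1-d) = n - 2" using d1 dle by simp
  have A: "(\<Sum>v\<in>S. gg a (degree H v)) \<le> gg a c + c * gg a 1"
    using lemmaA[OF gg0 gg_convx[OF a] gg_inc_convx[OF a] finS finH edgesH] cardH by simp
  have ffg: "ff a k = ff a 1 + gg a (k - 1)" if "k \<ge> 1" for k
    unfolding gg_def using that by simp
  have "(\<Sum>v\<in>S. ff a (degree E v)) = (\<Sum>v\<in>S. ff a 1 + gg a (y v))"
  proof (rule sum.cong[OF refl])
    fix v assume "v \<in> S"
    then have "degree E v \<ge> 1" using deg_pos unfolding S_def by auto
    then show "ff a (degree E v) = ff a 1 + gg a (y v)" unfolding y_def by (rule ffg)
  qed
  also have "\<dots> = (n-1) * ff a 1 + (\<Sum>v\<in>S. gg a (y v))"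
    using cardS by (simp add: sum.distrib)
  finally have SS: "(\<Sum>v\<in>S. ff a (degree E v)) = (n-1) * ff a 1 + (\<Sum>v\<in>S. gg a (y v))" .
  have "SEI a E = ff a d + (\<Sum>v\<in>S. ff a (degree E v))" using SEIv Vsplit d_def by simp
  also have "\<dots> = ff a 1 + gg a (d-1) + (n-1) * ff a 1 + (\<Sum>v\<in>S. gg a (y v))"
    using SS ffg[OF d1] by simp
  also have "\<dots> \<le> n * ff a 1 + gg a (n-2) + gg a c + c * gg a 1"
  proof -
    have "real (n-1) * ff a 1 + ff a 1 = real n * ff a 1" using n2
      by (simp add: of_nat_diff algebra_simps)
    then show ?thesis using T A XD by simp
  qed
  finally show ?thesis .
qed


definition ext_E :: "nat \<Rightarrow> nat \<Rightarrow> nat set set" where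
  "ext_E c n = star_E n \<union> (\<lambda>j. {1,j}) ` {2..c+1}"

lemma star_img: "star_E n = (\<lambda>i. {0,i}) ` {1..<n}"
  unfolding star_E_def by auto

lemma ext_cases:
  "star_E n = ext_E 0 n" "Sn_plus_E n = ext_E 1 n" "B1_E n = ext_E 2 n"
  "G4_E n = ext_E 3 n" "H4_E n = ext_E 4 n"
  unfolding ext_E_def Sn_plus_E_def B1_E_def G4_E_def H4_E_def
  by (auto simp: numeral_eq_Suc atLeastAtMostSuc_conv)

definition Dg :: "nat \<Rightarrow> nat \<Rightarrow> nat \<Rightarrow> nat" where
  "Dg c n v = (if v = 0 then n - 1 else if v = 1 then c + 1 else if v \<le> c + 1 then 2 else 1)"

lemma ext_deg:
  assumes "c + 2 \<le> n" "v < n"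
  shows "degree (ext_E c n) v = Dg c n v"
proof -
  consider "v = 0" | "v = 1" | "2 \<le> v" "v \<le> c+1" | "c + 2 \<le> v" by linarith
  then show ?thesis
  proof cases
    case 1
    have "{e\<in>ext_E c n. v \<in> e} = (\<lambda>i. {0,i}) ` {1..<n}"
      unfolding ext_E_def star_img using 1 assms by auto
    moreover have "inj_on (\<lambda>i. {0::nat,i}) {1..<n}" by (auto simp: inj_on_def doubleton_eq_iff)
    ultimately show ?thesis unfolding degree_def Dg_def using 1 by (simp add: card_image)
  next
    case 2
    have "{e\<in>ext_E c n. v \<in> e} = (\<lambda>j. {1,j}) ` ({0} \<union> {2..c+1})"
      unfolding ext_E_def star_img using 2 assms by (auto simp: insert_commute)
    moreover have "inj_on (\<lambda>j. {1::nat,j}) ({0} \<union> {2..c+1})" by (auto simp: inj_on_def doubleton_eq_iff)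
    ultimately show ?thesis unfolding degree_def Dg_def using 2 by (simp add: card_image)
  next
    case 3
    have "{e\<in>ext_E c n. v \<in> e} = {{0,v},{1,v}}"
      unfolding ext_E_def star_img using 3 assms by (auto simp: insert_commute)
    moreover have "{0,v} \<noteq> {1,v}" using 3 by (auto simp: doubleton_eq_iff)
    ultimately show ?thesis unfolding degree_def Dg_def using 3 by simp
  next
    case 4
    have "{e\<in>ext_E c n. v \<in> e} = {{0,v}}"
      unfolding ext_E_def star_img using 4 assms by (auto simp: doubleton_eq_iff)
    then show ?thesis unfolding degree_def Dg_def using 4 by simp
  qed
qed

lemma ext_class:
  assumes "c + 2 \<le> n"
  shows "cyc_class c n (star_V n) (ext_E c n)"
proof -
  have sg: "simple_graph (star_V n) (ext_E c n)"
    unfolding simple_graph_def star_V_def ext_E_def star_img using assms by auto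
  have R0: "(u,0) \<in> (adj_rel (ext_E c n))\<^sup>*" if "u < n" for u
  proof (cases "u = 0")
    case False
    then have "{u,0} \<in> ext_E c n" unfolding ext_E_def star_img using that
      by (auto simp: insert_commute)
    then show ?thesis unfolding adj_rel_def by auto
  qed simp
  have R0': "(0,u) \<in> (adj_rel (ext_E c n))\<^sup>*" if "u < n" for u
  proof (cases "u = 0")
    case False
    then have "{0,u} \<in> ext_E c n" unfolding ext_E_def star_img using that by auto
    then show ?thesis unfolding adj_rel_def by auto
  qed simp
  have conn: "connected_graph (star_V n) (ext_E c n)"
    unfolding connected_graph_def star_V_def
  proof (intro conjI ballI)
    fix u v assume "u \<in> {0..<n}" "v \<in> {0..<n}"
    then show "(u, v) \<in> (adj_rel (ext_E c n))\<^sup>*"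
      using rtrancl_trans[OF R0 R0'] by simp
  qed (use sg assms star_V_def in auto)
  have inj1: "inj_on (\<lambda>i. {0::nat,i}) {1..<n}" by (auto simp: inj_on_def doubleton_eq_iff)
  have inj2: "inj_on (\<lambda>j. {1::nat,j}) {2..c+1}" by (auto simp: inj_on_def doubleton_eq_iff)
  have disj: "(\<lambda>i. {0::nat,i}) ` {1..<n} \<inter> (\<lambda>j. {1,j}) ` {2..c+1} = {}"
  proof (rule equals0I)
    fix x assume "x \<in> (\<lambda>i. {0::nat,i}) ` {1..<n} \<inter> (\<lambda>j. {1,j}) ` {2..c+1}"
    then obtain i j where ij: "x = {0,i}" "x = {1,j}" "j \<in> {2..c+1}" by blast
    then have "(0::nat) \<in> {1,j}" by blast
    then show False using ij(3) by simp
  qed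
  have "card (ext_E c n) = (n - 1) + c"
    unfolding ext_E_def star_img
    using card_Un_disjoint[OF _ _ disj] card_image[OF inj1] card_image[OF inj2] by simp
  moreover have "card (star_V n) = n" unfolding star_V_def by simp
  ultimately show ?thesis unfolding cyc_class_def using conn assms by simp
qed

lemma ext_SEI:
  assumes "c + 2 \<le> n"
  shows "SEI a (ext_E c n) = n * ff a 1 + gg a (n-2) + gg a c + c * gg a 1"
proof -
  have cl: "cyc_class c n (star_V n) (ext_E c n)" using ext_class[OF assms] .
  then have sg: "simple_graph (star_V n) (ext_E c n)"
    unfolding cyc_class_def connected_graph_def by auto
  have finE: "finite (ext_E c n)" unfolding ext_E_def star_img by simp
  have "SEI a (ext_E c n) = (\<Sum>v\<in>{0..<n}. ff a (degree (ext_E c n) v))"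
    using SEI_vertex[of "{0..<n}" "ext_E c n"] sg finE unfolding simple_graph_def star_V_def by auto
  also have "\<dots> = (\<Sum>v\<in>{0..<n}. ff a (Dg c n v))"
    using ext_deg[OF assms] by (intro sum.cong) auto
  also have "\<dots> = ff a (n-1) + ff a (c+1) + (\<Sum>v\<in>{2..<n}. ff a (Dg c n v))"
    using assms by (simp add: sum.atLeast_Suc_lessThan Dg_def numeral_2_eq_2)
  also have "(\<Sum>v\<in>{2..<n}. ff a (Dg c n v)) = (\<Sum>v\<in>{2..<c+2}. ff a (Dg c n v)) + (\<Sum>v\<in>{c+2..<n}. ff a (Dg c n v))"
    using assms by (intro sum.atLeastLessThan_concat[symmetric]) auto
  also have "(\<Sum>v\<in>{2..<c+2}. ff a (Dg c n v)) = (\<Sum>v\<in>{2..<c+2}. ff a 2)"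
    by (intro sum.cong) (auto simp: Dg_def numeral_2_eq_2)
  also have "(\<Sum>v\<in>{c+2..<n}. ff a (Dg c n v)) = (\<Sum>v\<in>{c+2..<n}. ff a 1)"
    by (intro sum.cong) (auto simp: Dg_def)
  finally have h1: "SEI a (ext_E c n) = ff a (n-1) + ff a (c+1) + c * ff a 2 + (n - (c+2)) * ff a 1"
    by simp
  have h2: "gg a (n-2) = ff a (n-1) - ff a 1" unfolding gg_def using assms
    by (simp add: Suc_diff_Suc numeral_2_eq_2)
  have h3: "gg a c = ff a (c+1) - ff a 1" unfolding gg_def by simp
  have h4: "gg a 1 = ff a 2 - ff a 1" unfolding gg_def by (simp add: numeral_2_eq_2)
  have h5: "real (n - (c+2)) = real n - c - 2" using assms by (simp add: of_nat_diff)
  show ?thesis unfolding h1 h2 h3 h4 h5 by (simp add: algebra_simps)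
qed


lemma gen_max:
  assumes a: "a > 1" and cn: "c + 2 \<le> n"
  shows "is_SEI_max a c n (star_V n) (ext_E c n) TYPE('a)"
  unfolding is_SEI_max_def
proof (intro conjI allI impI)
  show "cyc_class c n (star_V n) (ext_E c n)" using ext_class[OF cn] .
  fix V :: "'a set" and E assume "cyc_class c n V E"
  then show "SEI a E \<le> SEI a (ext_E c n)"
  proof -
    have "n \<ge> 2" using cn by simp
    from upper[OF a \<open>cyc_class c n V E\<close> this] show ?thesis using ext_SEI[OF cn, of a] by simp
  qed
qed

lemma n1_max:
  shows "is_SEI_max a 0 1 (star_V 1) (star_E 1) TYPE('a)"
  unfolding is_SEI_max_def
proof (intro conjI allI impI)
  have E: "star_E 1 = {}" unfolding star_E_def by auto
  show "cyc_class 0 1 (star_V 1) (star_E 1)"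
    unfolding cyc_class_def connected_graph_def simple_graph_def star_V_def E by auto
  fix V :: "'a set" and E assume cc: "cyc_class 0 1 V E"
  then have "finite V" "\<forall>e\<in>E. e \<subseteq> V" "card E = 0"
    unfolding cyc_class_def connected_graph_def simple_graph_def by auto
  moreover have "finite E" using calculation by (meson PowI finite_Pow_iff finite_subset subsetI)
  ultimately have "E = {}" by simp
  then show "SEI a E \<le> SEI a (star_E 1)" unfolding E SEI_def by simp
qed

theorem theorem8:
  fixes a :: real and n :: nat
  assumes "a > 1"
  shows "(n \<ge> 1 \<longrightarrow> is_SEI_max a 0 n (star_V n) (star_E n) TYPE('a))
    \<and> (n \<ge> 3 \<longrightarrow> is_SEI_max a 1 n (star_V n) (Sn_plus_E n) TYPE('a))
    \<and> (n \<ge> 4 \<longrightarrow> is_SEI_max a 2 n (star_V n) (B1_E n) TYPE('a))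
    \<and> (n \<ge> 5 \<longrightarrow> is_SEI_max a 3 n (star_V n) (G4_E n) TYPE('a))
    \<and> (n \<ge> 6 \<longrightarrow> is_SEI_max a 4 n (star_V n) (H4_E n) TYPE('a))"
proof (intro conjI impI)
  assume "n \<ge> 1"
  show "is_SEI_max a 0 n (star_V n) (star_E n) TYPE('a)"
  proof (cases "n = 1")
    case True then show ?thesis using n1_max by simp
  next
    case False
    then have "0 + 2 \<le> n" using \<open>n \<ge> 1\<close> by simp
    then show ?thesis using gen_max[OF assms] ext_cases(1) by metis
  qed
next
  assume "n \<ge> 3" then have "1 + 2 \<le> n" by simp
  then show "is_SEI_max a 1 n (star_V n) (Sn_plus_E n) TYPE('a)"
    using gen_max[OF assms] ext_cases(2) by metis
next
  assume "n \<ge> 4" then have "2 + 2 \<le> n" by simp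
  then show "is_SEI_max a 2 n (star_V n) (B1_E n) TYPE('a)"
    using gen_max[OF assms] ext_cases(3) by metis
next
  assume "n \<ge> 5" then have "3 + 2 \<le> n" by simp
  then show "is_SEI_max a 3 n (star_V n) (G4_E n) TYPE('a)"
    using gen_max[OF assms] ext_cases(4) by metis
next
  assume "n \<ge> 6" then have "4 + 2 \<le> n" by simp
  then show "is_SEI_max a 4 n (star_V n) (H4_E n) TYPE('a)"
    using gen_max[OF assms] ext_cases(5) by metis
qed

end
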